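(* Let $G\in\mathbb{R}^{n_c\times n_z}$ have all rows nonzero, $S\in\mathbb{R}^{n_c\times n_x}$, $w\in\mathbb{R}^{n_c}$, and assume $\mathcal{V}=\{v\in\mathbb{R}^{n_x+n_z}: \bar Hv\le w\}\neq\emptyset$ where $\bar H=[-S,\;G]$. Let $i\in\{1,\dots,n_c\}$ and let $\sigma_i$ be as defined below. Then there is $M_0>0$ such that for every $M\ge M_0$, $$\sigma_i=\inf\Big\{r:\ v\in\mathcal{V},\ r\ge0,\ \delta\in\{0,1\}^{n_c},\ \frac{w_j-\bar H_jv}{\|\bar H_j\|}-M\delta_j<r\le\frac{w_j-\bar H_jv}{\|\bar H_j\|}+M(1-\delta_j)\ \forall j,\ \sum_{j=1}^{n_c}\delta_j<n_c-i\Big\},$$ i.e. $\sigma_i$ equals the optimal value of this mixed integer linear program (with $\inf\emptyset=+\infty$).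
   Context: $\bar H_j$ is the $j$-th row of $\bar H$, $w_j$ the $j$-th entry of $w$, $\mathcal{V}_j=\{v:\bar H_jv\le w_j\}$, $\mathcal{B}(v,r)$ the closed Euclidean ball. For $i\in\{1,\dots,n_c\}$, $\sigma_i=\sup\{r\ge0: \inf_{v\in\mathcal{V}}|\{j: \mathcal{B}(v,r)\subseteq\mathcal{V}_j\}|\ge n_c-i\}$ (possibly $+\infty$). The paper describes $M$ as "a big number"; the claim makes this precise as "for all sufficiently large $M$". *)

theory Defs
  imports "HOL-Analysis.Analysis" "HOL-Library.Extended_Real"
begin

text \<open>Points v of R^(n_x+n_z) are pairs (x,z) with x in R^n_x, z in R^n_z (the product
  carries the Euclidean inner product and norm). Rows are indexed by the finite type 'c,
  so n_c = CARD('c).\<close>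

definition Hbar_row :: "real^'x^'c \<Rightarrow> real^'z^'c \<Rightarrow> 'c \<Rightarrow> (real^'x) \<times> (real^'z)" where
  "Hbar_row S G j = (- (S $ j), G $ j)"

definition Vset :: "real^'x^'c \<Rightarrow> real^'z^'c \<Rightarrow> real^'c \<Rightarrow> ((real^'x) \<times> (real^'z)) set" where
  "Vset S G w = {v. \<forall>j. Hbar_row S G j \<bullet> v \<le> w $ j}"

definition Vj :: "real^'x^'c \<Rightarrow> real^'z^'c \<Rightarrow> real^'c \<Rightarrow> 'c \<Rightarrow> ((real^'x) \<times> (real^'z)) set" where
  "Vj S G w j = {v. Hbar_row S G j \<bullet> v \<le> w $ j}"

definition sigma :: "real^'x^'c \<Rightarrow> real^'z^'c \<Rightarrow> real^'c \<Rightarrow> nat \<Rightarrow> ereal" where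
  "sigma S G w i = Sup {ereal r | r. r \<ge> 0 \<and>
      (INF v\<in>Vset S G w. card {j. cball v r \<subseteq> Vj S G w j}) \<ge> CARD('c) - i}"

definition milp_val :: "real^'x^'c \<Rightarrow> real^'z^'c \<Rightarrow> real^'c \<Rightarrow> nat \<Rightarrow> real \<Rightarrow> ereal" where
  "milp_val S G w i M = Inf {ereal r | r v (\<delta> :: 'c \<Rightarrow> real).
      v \<in> Vset S G w \<and> r \<ge> 0 \<and> (\<forall>j. \<delta> j \<in> {0, 1}) \<and>
      (\<forall>j. (w $ j - Hbar_row S G j \<bullet> v) / norm (Hbar_row S G j) - M * \<delta> j < r \<and>
            r \<le> (w $ j - Hbar_row S G j \<bullet> v) / norm (Hbar_row S G j) + M * (1 - \<delta> j)) \<and>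
      (\<Sum>j\<in>UNIV. \<delta> j) < real (CARD('c) - i)}"

end

theory Submission
  imports Defs
begin

lemma closed_poly_image:
  fixes F :: "('a::euclidean_space \<times> real) set" and L :: "'a \<Rightarrow> 'b::real_normed_vector"
  assumes finF: "finite F" and bl: "bounded_linear L"
  shows "closed (L ` {x. \<forall>p\<in>F. fst p \<bullet> x \<le> snd p})"
proof -
  let ?Q = "{x. \<forall>p\<in>F. fst p \<bullet> x \<le> snd p}"
  have "?Q = (\<Inter>p\<in>F. {x. fst p \<bullet> x \<le> snd p})" by auto
  then have Qc: "closed ?Q" by (auto intro!: closed_INT closed_halfspace_le)
  have lin: "linear L" using bl by (rule bounded_linear.linear)
  have cL: "continuous_on UNIV L" using linear_continuous_on bl by blast
  show ?thesis unfolding closed_sequential_limits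
  proof (intro allI impI, elim conjE)
    fix y l assume yin: "\<forall>n. y n \<in> L ` ?Q" and yl: "y \<longlonglongrightarrow> l"
    define Sn where "Sn n = ?Q \<inter> {x. L x = y n}" for n
    have Snc: "closed (Sn n)" for n
      unfolding Sn_def by (intro closed_Int Qc closed_Collect_eq cL continuous_on_const)
    have Snne: "Sn n \<noteq> {}" for n
    proof -
      from yin have "y n \<in> L ` ?Q" by blast
      then obtain z where "z \<in> ?Q" and "y n = L z" by (rule imageE)
      then have "z \<in> Sn n" unfolding Sn_def by (intro IntI) auto
      then show ?thesis by blast
    qed
    have "\<exists>x. x \<in> Sn n \<and> (\<forall>z\<in>Sn n. norm x \<le> norm z)" for n
    proof -
      obtain z where "z \<in> Sn n" "\<And>y. y \<in> Sn n \<Longrightarrow> dist 0 z \<le> dist 0 y"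
        using distance_attains_inf[OF Snc[of n] Snne[of n], of 0] by blast
      then show ?thesis by (auto simp: dist_0_norm)
    qed
    then have "\<forall>n. \<exists>x. x \<in> Sn n \<and> (\<forall>z\<in>Sn n. norm x \<le> norm z)" by blast
    then obtain x where xx: "\<forall>n. x n \<in> Sn n \<and> (\<forall>z\<in>Sn n. norm (x n) \<le> norm z)"
      by (rule choice[THEN exE]) 
    have xS: "\<And>n. x n \<in> Sn n" and xmin: "\<And>n z. z \<in> Sn n \<Longrightarrow> norm (x n) \<le> norm z"
      using xx by auto
    have xQ: "\<And>n. x n \<in> ?Q" and Lx: "\<And>n. L (x n) = y n" using xS unfolding Sn_def by auto
    define N where "N n = 1 + norm (x n)" for n
    define u where "u n = x n /\<^sub>R N n" for n
    have Npos: "N n > 0" for n unfolding N_def by (simp add: add_pos_nonneg)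
    have nu: "norm (u n) = norm (x n) / N n" for n
      unfolding u_def using Npos[of n] by (simp add: divide_inverse_commute)
    have nu2: "1 - norm (u n) = inverse (N n)" for n
    proof -
      have e: "norm (x n) = N n - 1" by (simp add: N_def)
      have "norm (u n) = (N n - 1) / N n" unfolding nu e ..
      also have "\<dots> = 1 - inverse (N n)" using Npos[of n]
        by (simp add: diff_divide_distrib inverse_eq_divide)
      finally show ?thesis by simp
    qed
    have nu1: "N n = inverse (1 - norm (u n))" for n
      unfolding nu2 by simp
    have xu: "x n = N n *\<^sub>R u n" for n unfolding u_def using Npos[of n] by simp
    have nule: "norm (u n) \<le> 1" for n
    proof -
      have "norm (x n) \<le> 1 * N n" unfolding N_def by simp
      then show ?thesis unfolding nu using Npos[of n] by (simp only: pos_divide_le_eq)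
    qed
    have "bounded (range u)" unfolding bounded_iff using nule by blast
    then obtain u0 \<phi> where \<phi>: "strict_mono \<phi>" and uc: "(u \<circ> \<phi>) \<longlonglongrightarrow> u0"
      using bounded_imp_convergent_subsequence by blast
    have uc': "(\<lambda>n. u (\<phi> n)) \<longlonglongrightarrow> u0" using uc by (simp add: comp_def)
    have nuc: "(\<lambda>n. norm (u (\<phi> n))) \<longlonglongrightarrow> norm u0" using tendsto_norm[OF uc'] .
    have nu0: "norm u0 \<le> 1" using LIMSEQ_le_const2[OF nuc] nule by blast
    have yc: "(\<lambda>n. y (\<phi> n)) \<longlonglongrightarrow> l" using LIMSEQ_subseq_LIMSEQ[OF yl \<phi>] by (simp add: comp_def)
    have Luc: "(\<lambda>n. L (u (\<phi> n))) \<longlonglongrightarrow> L u0" using bounded_linear.tendsto[OF bl uc'] .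
    show "l \<in> L ` ?Q"
    proof (cases "norm u0 < 1")
      case True
      have "(\<lambda>n. N (\<phi> n)) \<longlonglongrightarrow> inverse (1 - norm u0)"
        unfolding nu1 using True by (intro tendsto_inverse tendsto_diff nuc tendsto_const) simp
      then have xc: "(\<lambda>n. x (\<phi> n)) \<longlonglongrightarrow> inverse (1 - norm u0) *\<^sub>R u0"
        unfolding xu by (intro tendsto_scaleR uc')
      define x0 where "x0 = inverse (1 - norm u0) *\<^sub>R u0"
      have "x0 \<in> ?Q"
        by (rule closed_sequentially[OF Qc _ xc[folded x0_def]]) (use xQ in blast)
      moreover have "(\<lambda>n. L (x (\<phi> n))) \<longlonglongrightarrow> L x0"
        using bounded_linear.tendsto[OF bl xc] unfolding x0_def .
      then have "(\<lambda>n. y (\<phi> n)) \<longlonglongrightarrow> L x0" by (simp only: Lx)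
      then have "L x0 = l" using yc by (rule LIMSEQ_unique)
      ultimately show ?thesis by blast
    next
      case False
      then have n1: "norm u0 = 1" using nu0 by simp
      have "((\<lambda>n. 1 - norm (u (\<phi> n))) \<longlongrightarrow> 0) sequentially"
        using tendsto_diff[OF tendsto_const nuc, of 1] n1 by simp
      moreover have "\<forall>\<^sub>F n in sequentially. 0 < 1 - norm (u (\<phi> n))"
        unfolding nu2 using Npos by simp
      ultimately have Ninf: "filterlim (\<lambda>n. N (\<phi> n)) at_top sequentially"
        unfolding nu1 by (rule filterlim_inverse_at_top)
      have iN0: "(\<lambda>n. inverse (N (\<phi> n))) \<longlonglongrightarrow> 0"
        using tendsto_inverse_0_at_top[OF Ninf] .
      have "(\<lambda>n. L (u (\<phi> n))) \<longlonglongrightarrow> 0 *\<^sub>R l"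
      proof -
        have "L (u (\<phi> n)) = inverse (N (\<phi> n)) *\<^sub>R y (\<phi> n)" for n
          unfolding u_def using linear_cmul[OF lin] Lx by (simp add: divide_inverse_commute)
        then show ?thesis using tendsto_scaleR[OF iN0 yc] by simp
      qed
      then have Lu0: "L u0 = 0" using Luc LIMSEQ_unique by fastforce
      have ev1: "\<forall>p\<in>F. eventually (\<lambda>n. fst p \<bullet> (x (\<phi> n) - u0) \<le> snd p) sequentially"
      proof
        fix p assume pF: "p \<in> F"
        have c1: "(\<lambda>n. fst p \<bullet> u (\<phi> n)) \<longlonglongrightarrow> fst p \<bullet> u0"
          by (intro tendsto_inner tendsto_const uc')
        have c2: "(\<lambda>n. snd p * inverse (N (\<phi> n))) \<longlonglongrightarrow> snd p * 0"
          by (intro tendsto_mult tendsto_const iN0)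
        have le: "fst p \<bullet> u (\<phi> n) \<le> snd p * inverse (N (\<phi> n))" for n
        proof -
          have "fst p \<bullet> x (\<phi> n) \<le> snd p" using xQ pF by blast
          then show ?thesis unfolding u_def using Npos[of "\<phi> n"]
            by (simp add: divide_inverse_commute mult_right_mono)
        qed
        have au: "fst p \<bullet> u0 \<le> 0" using LIMSEQ_le[OF c1 c2] le by auto
        show "eventually (\<lambda>n. fst p \<bullet> (x (\<phi> n) - u0) \<le> snd p) sequentially"
        proof (cases "fst p \<bullet> u0 < 0")
          case True
          have "filterlim (\<lambda>n. (fst p \<bullet> u (\<phi> n)) * N (\<phi> n)) at_bot sequentially"
            by (rule filterlim_tendsto_neg_mult_at_bot[OF c1 True Ninf])
          moreover have "(fst p \<bullet> u (\<phi> n)) * N (\<phi> n) = fst p \<bullet> x (\<phi> n)" for n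
            unfolding xu by simp
          ultimately have "eventually (\<lambda>n. fst p \<bullet> x (\<phi> n) \<le> snd p + fst p \<bullet> u0) sequentially"
            unfolding filterlim_at_bot by simp
          then show ?thesis by eventually_elim (simp add: inner_diff_right)
        next
          case False
          then have "fst p \<bullet> u0 = 0" using au by simp
          then show ?thesis using xQ pF by (simp add: inner_diff_right)
        qed
      qed
      have ev1': "eventually (\<lambda>n. \<forall>p\<in>F. fst p \<bullet> (x (\<phi> n) - u0) \<le> snd p) sequentially"
        using eventually_ball_finite[OF finF ev1] .
      have "(\<lambda>n. u (\<phi> n) \<bullet> u0) \<longlonglongrightarrow> u0 \<bullet> u0" by (intro tendsto_inner tendsto_const uc')
      moreover have "u0 \<bullet> u0 = 1" using n1 by (simp add: dot_square_norm)
      ultimately have "(\<lambda>n. u (\<phi> n) \<bullet> u0) \<longlonglongrightarrow> 1" by simp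
      then have "eventually (\<lambda>n. u (\<phi> n) \<bullet> u0 > 1/2) sequentially"
        by (rule order_tendstoD(1)) simp
      then have ev2: "eventually (\<lambda>n. norm (x (\<phi> n) - u0) < norm (x (\<phi> n))) sequentially"
      proof eventually_elim
        case (elim n)
        have N1: "N (\<phi> n) \<ge> 1" unfolding N_def by simp
        have "x (\<phi> n) \<bullet> u0 = N (\<phi> n) * (u (\<phi> n) \<bullet> u0)" unfolding xu by simp
        also have "\<dots> > 1/2"
        proof -
          have "N (\<phi> n) * (u (\<phi> n) \<bullet> u0) \<ge> 1 * (u (\<phi> n) \<bullet> u0)"
            by (rule mult_right_mono[OF N1]) (use elim in linarith)
          then show ?thesis using elim by linarith
        qed
        finally have gt: "x (\<phi> n) \<bullet> u0 > 1/2" .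
        have "(norm (x (\<phi> n) - u0))^2 = (norm (x (\<phi> n)))^2 - 2 * (x (\<phi> n) \<bullet> u0) + (norm u0)^2"
          by (simp add: power2_norm_eq_inner inner_diff_left inner_diff_right inner_commute)
        also have "\<dots> < (norm (x (\<phi> n)))^2" using gt n1 by simp
        finally show ?case by (simp add: power_less_imp_less_base)
      qed
      obtain n where n1': "\<forall>p\<in>F. fst p \<bullet> (x (\<phi> n) - u0) \<le> snd p"
        and n2: "norm (x (\<phi> n) - u0) < norm (x (\<phi> n))"
      proof -
        from eventually_conj[OF ev1' ev2] obtain N0 where
          "\<forall>n\<ge>N0. (\<forall>p\<in>F. fst p \<bullet> (x (\<phi> n) - u0) \<le> snd p) \<and> norm (x (\<phi> n) - u0) < norm (x (\<phi> n))"
          unfolding eventually_sequentially by blast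
        then show ?thesis using that by blast
      qed
      have "L (x (\<phi> n) - u0) = y (\<phi> n)" using linear_diff[OF lin] Lx Lu0 by simp
      then have "x (\<phi> n) - u0 \<in> Sn (\<phi> n)" unfolding Sn_def using n1' by simp
      then have "norm (x (\<phi> n)) \<le> norm (x (\<phi> n) - u0)" by (rule xmin)
      then show ?thesis using n2 by linarith
    qed
  qed
qed

lemma cball_halfspace:
  fixes h v :: "'a::real_inner"
  assumes hp: "norm h > 0" and r0: "0 \<le> r"
  shows "cball v r \<subseteq> {x. h \<bullet> x \<le> c} \<longleftrightarrow> r \<le> (c - h \<bullet> v) / norm h"
proof
  assume sub: "cball v r \<subseteq> {x. h \<bullet> x \<le> c}"
  define x where "x = v + (r / norm h) *\<^sub>R h"
  have "dist v x = r" unfolding x_def dist_norm using hp r0 by simp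
  then have "x \<in> cball v r" by simp
  then have "h \<bullet> x \<le> c" using sub by blast
  moreover have "h \<bullet> x = h \<bullet> v + r * norm h"
    unfolding x_def using hp by (simp add: inner_add_right dot_square_norm power2_eq_square)
  ultimately have "r * norm h \<le> c - h \<bullet> v" by simp
  then show "r \<le> (c - h \<bullet> v) / norm h" using hp by (simp add: pos_le_divide_eq)
next
  assume le: "r \<le> (c - h \<bullet> v) / norm h"
  then have le': "r * norm h \<le> c - h \<bullet> v" using hp by (simp add: pos_le_divide_eq)
  show "cball v r \<subseteq> {x. h \<bullet> x \<le> c}"
  proof
    fix x assume "x \<in> cball v r"
    then have nx: "norm (x - v) \<le> r" by (simp add: dist_norm norm_minus_commute)
    have "h \<bullet> x = h \<bullet> v + h \<bullet> (x - v)" by (simp add: inner_diff_right)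
    also have "\<dots> \<le> h \<bullet> v + norm h * norm (x - v)" using norm_cauchy_schwarz by simp
    also have "\<dots> \<le> h \<bullet> v + norm h * r" using nx hp by (simp add: mult_left_mono)
    finally show "x \<in> {x. h \<bullet> x \<le> c}" using le' by (simp add: mult.commute)
  qed
qed

lemma halfspace_rewrite:
  fixes a v :: "'a::real_inner"
  assumes "c > 0"
  shows "((w - a \<bullet> v) / c \<le> r) \<longleftrightarrow> (- (a /\<^sub>R c) \<bullet> v + (-1) * r \<le> - (w / c))"
proof -
  have e: "- (a /\<^sub>R c) \<bullet> v + (-1) * r = (- (a \<bullet> v) - c * r) / c"
    using assms by (simp add: field_simps)
  have "((- (a \<bullet> v) - c * r) / c \<le> - (w / c)) \<longleftrightarrow> (- (a \<bullet> v) - c * r \<le> - w)"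
    using assms by (metis divide_minus_left divide_le_cancel less_le_not_le)
  moreover have "((w - a \<bullet> v) / c \<le> r) \<longleftrightarrow> (w - a \<bullet> v \<le> r * c)" using assms by (simp add: pos_divide_le_eq)
  ultimately show ?thesis unfolding e by (auto simp: algebra_simps)
qed

lemma halfspace_rewrite2:
  fixes a v :: "'a::real_inner"
  assumes "c > 0"
  shows "((w - a \<bullet> v) / c \<le> r) \<longleftrightarrow> (- (inverse c * (a \<bullet> v)) - r \<le> - (w / c))"
  using halfspace_rewrite[OF assms, of w a v r] by simp

lemma ball_img: "(\<forall>p\<in>f ` X. P p) \<longleftrightarrow> (\<forall>x\<in>X. P (f x))" by auto

lemma sum_01:
  fixes \<delta> :: "'c::finite \<Rightarrow> real"
  assumes "\<forall>j. \<delta> j \<in> {0, 1}"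
  shows "(\<Sum>j\<in>UNIV. \<delta> j) = real (card {j. \<delta> j = 1})"
proof -
  have "(\<Sum>j\<in>UNIV. \<delta> j) = (\<Sum>j\<in>UNIV. if \<delta> j = 1 then 1 else 0)"
    by (rule sum.cong) (use assms in auto)
  also have "\<dots> = real (card {j. \<delta> j = 1})" by (simp add: sum.If_cases)
  finally show ?thesis .
qed

theorem lemma7:
  fixes S :: "real^'x^'c" and G :: "real^'z^'c" and w :: "real^'c" and i :: nat
  assumes "\<forall>j. G $ j \<noteq> 0"
    and "Vset S G w \<noteq> {}"
    and "1 \<le> i" and "i \<le> CARD('c)"
  shows "\<exists>M0>0. \<forall>M\<ge>M0. sigma S G w i = milp_val S G w i M"
proof -
  define h where "h j = Hbar_row S G j" for j
  define d where "d j v = (w $ j - h j \<bullet> v) / norm (h j)" for j v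
  define V where "V = Vset S G w"
  define q where "q = CARD('c) - i"
  have hpos: "norm (h j) > 0" for j
    unfolding h_def Hbar_row_def using assms(1) by (simp add: zero_prod_def)
  have Vmem: "v \<in> V \<longleftrightarrow> (\<forall>j. h j \<bullet> v \<le> w $ j)" for v
    unfolding V_def Vset_def h_def by simp
  have dnn: "0 \<le> d j v" if "v \<in> V" for j v
    using that hpos[of j] unfolding Vmem d_def by (simp add: divide_nonneg_pos)
  have Vne: "V \<noteq> {}" using assms(2) V_def by simp
  have cb: "cball v r \<subseteq> Vj S G w j \<longleftrightarrow> r \<le> d j v" if "0 \<le> r" for v r j
  proof -
    have "Vj S G w j = {x. h j \<bullet> x \<le> w $ j}" unfolding Vj_def h_def by simp
    then show ?thesis unfolding d_def using cball_halfspace[OF hpos[of j] that] by simp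
  qed
  define A where "A = {r. 0 \<le> r \<and> (\<forall>v\<in>V. q \<le> card {j. r \<le> d j v})}"
  define T where "T = {r. 0 \<le> r \<and> (\<exists>v\<in>V. card {j. r \<le> d j v} < q)}"
  have sig: "sigma S G w i = Sup (ereal ` A)"
  proof -
    have "(CARD('c) - i \<le> (INF v\<in>V. card {j. cball v r \<subseteq> Vj S G w j}))
          \<longleftrightarrow> (\<forall>v\<in>V. q \<le> card {j. r \<le> d j v})" if r0: "0 \<le> r" for r
    proof -
      have bb: "bdd_below ((\<lambda>v. card {j. cball v r \<subseteq> Vj S G w j}) ` V)"
        by (rule bdd_belowI[of _ 0]) simp
      show ?thesis unfolding le_cINF_iff[OF Vne bb] q_def using cb[OF r0] by simp
    qed
    then have "{ereal r | r. r \<ge> 0 \<and> (INF v\<in>Vset S G w. card {j. cball v r \<subseteq> Vj S G w j}) \<ge> CARD('c) - i}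
        = ereal ` A" unfolding A_def V_def[symmetric] by auto
    then show ?thesis unfolding sigma_def by simp
  qed
  have att: "\<exists>p. fst p \<in> V \<and> 0 \<le> snd p \<and> (\<forall>j\<in>K. d j (fst p) \<le> snd p) \<and>
      (\<forall>v' r'. v' \<in> V \<and> 0 \<le> r' \<and> (\<forall>j\<in>K. d j v' \<le> r') \<longrightarrow> snd p \<le> r')" for K
  proof -
    define F where "F = (\<lambda>j. ((h j, 0::real), w $ j)) ` UNIV
        \<union> (\<lambda>j. ((- (h j /\<^sub>R norm (h j)), -1::real), - (w $ j / norm (h j)))) ` K
        \<union> {((0, -1), 0)}"
    have finF: "finite F" unfolding F_def by simp
    let ?Q = "{x. \<forall>p\<in>F. fst p \<bullet> x \<le> snd p}"
    have Qeq: "x \<in> ?Q \<longleftrightarrow> fst x \<in> V \<and> 0 \<le> snd x \<and> (\<forall>j\<in>K. d j (fst x) \<le> snd x)" for x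
    proof -
      obtain v r where x: "x = (v, r)" by (cases x) blast
      have "x \<in> ?Q \<longleftrightarrow> (\<forall>j. h j \<bullet> v \<le> w $ j) \<and>
          (\<forall>j\<in>K. - (inverse (norm (h j)) * (h j \<bullet> v)) - r \<le> - (w $ j / norm (h j))) \<and> 0 \<le> r"
        unfolding F_def x ball_Un ball_img by (simp add: inner_Pair)
      also have "\<dots> \<longleftrightarrow> fst x \<in> V \<and> 0 \<le> snd x \<and> (\<forall>j\<in>K. d j (fst x) \<le> snd x)"
        unfolding x Vmem d_def by (simp add: halfspace_rewrite2[OF hpos]) blast
      finally show ?thesis .
    qed
    define Z where "Z = snd ` ?Q"
    have Zc: "closed Z" unfolding Z_def by (rule closed_poly_image[OF finF bounded_linear_snd])
    obtain v0 where v0: "v0 \<in> V" using Vne by blast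
    have "(v0, \<Sum>j\<in>UNIV. d j v0) \<in> ?Q"
    proof -
      have dv0: "\<And>j. 0 \<le> d j v0" using dnn[OF v0] by blast
      have "\<forall>j\<in>K. d j v0 \<le> (\<Sum>j\<in>UNIV. d j v0)"
        using dv0 by (auto intro!: member_le_sum)
      moreover have "0 \<le> (\<Sum>j\<in>UNIV. d j v0)" using dv0 by (simp add: sum_nonneg)
      ultimately show ?thesis unfolding Qeq using v0 by simp
    qed
    then have Zne: "Z \<noteq> {}" unfolding Z_def by blast
    have Zb: "bdd_below Z"
    proof (rule bdd_belowI[of _ 0])
      fix z assume "z \<in> Z"
      then obtain x where "x \<in> ?Q" "z = snd x" unfolding Z_def by blast
      then show "0 \<le> z" using Qeq[of x] by simp
    qed
    have "Inf Z \<in> Z" by (rule closed_contains_Inf[OF Zne Zb Zc])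
    then have "Inf Z \<in> snd ` ?Q" by (simp only: Z_def)
    then obtain p where ps: "Inf Z = snd p" and pQ: "p \<in> ?Q" by (rule imageE)
    show ?thesis
    proof (intro exI[of _ p] conjI allI impI)
      show "fst p \<in> V" "0 \<le> snd p" "\<forall>j\<in>K. d j (fst p) \<le> snd p" using Qeq[of p] pQ by auto
      fix v' r' assume "v' \<in> V \<and> 0 \<le> r' \<and> (\<forall>j\<in>K. d j v' \<le> r')"
      then have "(v', r') \<in> ?Q" unfolding Qeq by simp
      then have "r' \<in> Z" unfolding Z_def by (rule image_eqI[rotated]) simp
      then show "snd p \<le> r'" unfolding ps[symmetric] by (rule cInf_lower[OF _ Zb])
    qed
  qed
  then have "\<forall>K. \<exists>p. fst p \<in> V \<and> 0 \<le> snd p \<and> (\<forall>j\<in>K. d j (fst p) \<le> snd p) \<and>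
      (\<forall>v' r'. v' \<in> V \<and> 0 \<le> r' \<and> (\<forall>j\<in>K. d j v' \<le> r') \<longrightarrow> snd p \<le> r')" by blast
  then obtain pK where pK: "\<forall>K. fst (pK K) \<in> V \<and> 0 \<le> snd (pK K) \<and> (\<forall>j\<in>K. d j (fst (pK K)) \<le> snd (pK K)) \<and>
      (\<forall>v' r'. v' \<in> V \<and> 0 \<le> r' \<and> (\<forall>j\<in>K. d j v' \<le> r') \<longrightarrow> snd (pK K) \<le> r')"
    by (rule choice[THEN exE])
  define vK where "vK K = fst (pK K)" for K
  define rK where "rK K = snd (pK K)" for K
  have vKV: "vK K \<in> V" and rK0: "0 \<le> rK K" and rKK: "\<forall>j\<in>K. d j (vK K) \<le> rK K"
    and rKmin: "\<And>v' r'. v' \<in> V \<Longrightarrow> 0 \<le> r' \<Longrightarrow> (\<forall>j\<in>K. d j v' \<le> r') \<Longrightarrow> rK K \<le> r'" for K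
    unfolding vK_def rK_def using pK by blast+
  define tK where "tK K = rK K + (\<Sum>j\<in>UNIV. d j (vK K))" for K
  define M0 where "M0 = 1 + (\<Sum>K\<in>UNIV. tK K)"
  have tK0: "0 \<le> tK K" for K unfolding tK_def using rK0 vKV dnn by (simp add: add_nonneg_nonneg sum_nonneg)
  have tKle: "tK K \<le> (\<Sum>K\<in>UNIV. tK K)" for K by (rule member_le_sum) (use tK0 in auto)
  have bnd1: "rK K + 1 \<le> M0" for K
  proof -
    have "rK K \<le> tK K" unfolding tK_def using vKV dnn by (simp add: sum_nonneg)
    then show ?thesis using tKle[of K] unfolding M0_def by linarith
  qed
  have bnd2: "d j (vK K) + 1 \<le> M0" for K j
  proof -
    have "d j (vK K) \<le> (\<Sum>j\<in>UNIV. d j (vK K))" by (rule member_le_sum) (use vKV dnn in auto)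
    then have "d j (vK K) \<le> tK K" unfolding tK_def using rK0[of K] by linarith
    then show ?thesis using tKle[of K] unfolding M0_def by linarith
  qed
  have M0pos: "M0 > 0" using bnd1[of "{}"] rK0[of "{}"] by linarith
  have AT: "a \<le> t" if "a \<in> A" "t \<in> T" for a t
  proof (rule ccontr)
    assume "\<not> a \<le> t"
    then have ta: "t < a" by simp
    from that(2) obtain v where v: "v \<in> V" and c: "card {j. t \<le> d j v} < q" unfolding T_def by blast
    have "q \<le> card {j. a \<le> d j v}" using that(1) v unfolding A_def by blast
    also have "\<dots> \<le> card {j. t \<le> d j v}" by (rule card_mono) (use ta in auto)
    finally show False using c by simp
  qed
  have SupInf: "Sup (ereal ` A) = Inf (ereal ` T)"
  proof (rule antisym)
    show "Sup (ereal ` A) \<le> Inf (ereal ` T)"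
      by (rule Sup_least) (auto intro!: Inf_greatest AT)
    show "Inf (ereal ` T) \<le> Sup (ereal ` A)"
    proof (rule ccontr)
      assume "\<not> Inf (ereal ` T) \<le> Sup (ereal ` A)"
      then have lt: "Sup (ereal ` A) < Inf (ereal ` T)" by simp
      then obtain z where z1: "Sup (ereal ` A) < z" and z2: "z < Inf (ereal ` T)" using dense by blast
      have "0 \<in> A" unfolding A_def q_def
      proof (simp, intro ballI)
        fix v assume "v \<in> V"
        then have "{j. 0 \<le> d j v} = UNIV" using dnn by auto
        then show "CARD('c) - i \<le> card {j. 0 \<le> d j v}" by simp
      qed
      then have "ereal 0 \<le> Sup (ereal ` A)" by (simp add: Sup_upper)
      then have zpos: "ereal 0 < z" using z1 by simp
      have "z \<noteq> \<infinity>" using z2 by auto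
      then obtain r where zr: "z = ereal r" using zpos by (cases z) auto
      then have r0: "0 \<le> r" using zpos by simp
      show False
      proof (cases "r \<in> A")
        case True
        then have "ereal r \<le> Sup (ereal ` A)" by (simp add: Sup_upper)
        then show False using z1 zr by simp
      next
        case False
        then obtain v where "v \<in> V" "\<not> q \<le> card {j. r \<le> d j v}"
          using r0 unfolding A_def by blast
        then have "r \<in> T" using r0 unfolding T_def not_le by blast
        then have "Inf (ereal ` T) \<le> ereal r" by (simp add: Inf_lower)
        then show False using z2 zr by simp
      qed
    qed
  qed
  show ?thesis
  proof (intro exI[of _ M0] conjI allI impI M0pos)
    fix M assume MM: "M0 \<le> M"
    define Ms where "Ms = {r. \<exists>v (\<delta> :: 'c \<Rightarrow> real). v \<in> V \<and> 0 \<le> r \<and> (\<forall>j. \<delta> j \<in> {0, 1}) \<and>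
      (\<forall>j. d j v - M * \<delta> j < r \<and> r \<le> d j v + M * (1 - \<delta> j)) \<and> (\<Sum>j\<in>UNIV. \<delta> j) < real q}"
    have milp: "milp_val S G w i M = Inf (ereal ` Ms)"
      unfolding milp_val_def Ms_def d_def h_def q_def V_def
      by (rule arg_cong[where f=Inf]) auto
    have MsT: "Ms \<subseteq> T"
    proof
      fix r assume "r \<in> Ms"
      then obtain v and \<delta> :: "'c \<Rightarrow> real" where v: "v \<in> V" and r0: "0 \<le> r" and d01: "\<forall>j. \<delta> j \<in> {0, 1}"
        and b: "\<forall>j. d j v - M * \<delta> j < r \<and> r \<le> d j v + M * (1 - \<delta> j)"
        and s: "(\<Sum>j\<in>UNIV. \<delta> j) < real q" unfolding Ms_def by blast
      have "{j. r \<le> d j v} \<subseteq> {j. \<delta> j = 1}"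
      proof
        fix j assume "j \<in> {j. r \<le> d j v}"
        then have "r \<le> d j v" by simp
        moreover have "\<delta> j = 0 \<or> \<delta> j = 1" using d01 by auto
        ultimately show "j \<in> {j. \<delta> j = 1}" using b[rule_format, of j] by auto
      qed
      then have "card {j. r \<le> d j v} \<le> card {j. \<delta> j = 1}" by (rule card_mono[rotated]) simp
      moreover have "card {j. \<delta> j = 1} < q" using s sum_01[OF d01] by simp
      ultimately have "card {j. r \<le> d j v} < q" by linarith
      then show "r \<in> T" unfolding T_def using v r0 by blast
    qed
    have core: "\<exists>r\<in>Ms. r \<le> t'" if tT: "t \<in> T" and tt: "t < t'" for t t'
    proof -
      from tT obtain v where v: "v \<in> V" and c: "card {j. t \<le> d j v} < q" and t0: "0 \<le> t"
        unfolding T_def by blast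
      define K where "K = - {j. t \<le> d j v}"
      have "rK K \<le> t" by (rule rKmin[OF v t0]) (auto simp: K_def)
      define r where "r = min t' (rK K + 1)"
      define v' where "v' = vK K"
      define \<delta> :: "'c \<Rightarrow> real" where "\<delta> j = (if r \<le> d j v' then 1 else 0)" for j
      have r0: "0 \<le> r" unfolding r_def using rK0[of K] t0 tt by simp
      have rlt: "r \<le> rK K + 1" "r \<le> t'" unfolding r_def by auto
      have rgt: "rK K < r" unfolding r_def using \<open>rK K \<le> t\<close> tt by simp
      have d01: "\<forall>j. \<delta> j \<in> {0, 1}" unfolding \<delta>_def by simp
      have sub: "{j. \<delta> j = 1} \<subseteq> {j. t \<le> d j v}"
      proof
        fix j assume "j \<in> {j. \<delta> j = 1}"
        then have rj: "r \<le> d j v'" unfolding \<delta>_def by (simp split: if_splits)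
        show "j \<in> {j. t \<le> d j v}"
        proof (rule ccontr)
          assume "j \<notin> {j. t \<le> d j v}"
          then have "j \<in> K" unfolding K_def by simp
          then have "d j v' \<le> rK K" using rKK unfolding v'_def by blast
          then show False using rj rgt by simp
        qed
      qed
      have "card {j. \<delta> j = 1} \<le> card {j. t \<le> d j v}" by (rule card_mono[OF _ sub]) simp
      then have s: "(\<Sum>j\<in>UNIV. \<delta> j) < real q" using c sum_01[OF d01] by simp
      have b: "\<forall>j. d j v' - M * \<delta> j < r \<and> r \<le> d j v' + M * (1 - \<delta> j)"
      proof
        fix j
        have dn: "0 \<le> d j v'" unfolding v'_def using vKV dnn by blast
        have db: "d j v' + 1 \<le> M" using bnd2[of j K] MM unfolding v'_def by simp
        have rb: "r \<le> M" using bnd1[of K] MM rlt by simp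
        show "d j v' - M * \<delta> j < r \<and> r \<le> d j v' + M * (1 - \<delta> j)"
        proof (cases "r \<le> d j v'")
          case True
          then show ?thesis unfolding \<delta>_def using db r0 by simp
        next
          case False
          then show ?thesis unfolding \<delta>_def using rb dn by simp
        qed
      qed
      have "r \<in> Ms" unfolding Ms_def using vKV[of K] r0 d01 b s unfolding v'_def by blast
      then show ?thesis using rlt by blast
    qed
    have le1: "Inf (ereal ` T) \<le> Inf (ereal ` Ms)"
      by (rule Inf_superset_mono) (use MsT in blast)
    have le2: "Inf (ereal ` Ms) \<le> Inf (ereal ` T)"
    proof (rule Inf_greatest)
      fix y assume "y \<in> ereal ` T"
      then obtain t where tT: "t \<in> T" and y: "y = ereal t" by blast
      show "Inf (ereal ` Ms) \<le> y" unfolding y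
      proof (rule dense_ge)
        fix z assume tz: "ereal t < z"
        show "Inf (ereal ` Ms) \<le> z"
        proof (cases z)
          case (real t')
          then have "t < t'" using tz by simp
          then obtain r where "r \<in> Ms" "r \<le> t'" using core[OF tT] by blast
          then show ?thesis unfolding real by (intro Inf_lower2[of "ereal r"]) auto
        next
          case PInf
          then show ?thesis by simp
        next
          case MInf
          then show ?thesis using tz by simp
        qed
      qed
    qed
    show "sigma S G w i = milp_val S G w i M"
      unfolding sig milp SupInf using le1 le2 by (rule antisym)
  qed
qed

end
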